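(* Let $b$ be a positive integer relatively prime to $6$, let $a\in\{0,1,\dots,b-1\}$, and let $f$ be the multiplicative order of $3/2$ modulo $b$. Then for every positive integer $x$ relatively prime to $3$ there is an admissible vector $s\in\mathcal{E}(x)$ such that $v_s(x)\equiv a\pmod b$, $v_s(x)\not\equiv 0\pmod 3$, and $l(s)\le (b-1)f$.
   Context: Let $T_0^{-1}(x)=2x$ and $T_1^{-1}(x)=(2x-1)/3$, viewed as maps $\mathbb{Q}\to\mathbb{Q}$. For $s=(s_0,s_1,\dots,s_k)$ with $k\ge 0$ and all $s_i$ nonnegative integers, the length of $s$ is $l(s)=k$ and $v_s=T_0^{-s_0}\circ T_1^{-1}\circ T_0^{-s_1}\circ T_1^{-1}\circ\cdots\circ T_1^{-1}\circ T_0^{-s_k}$ (with $k$ occurrences of $T_1^{-1}$). The vector $s$ is admissible for a positive integer $x$ if $v_s(x)$ is a positive integer; $\mathcal{E}(x)$ denotes the set of vectors admissible for $x$. *)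

theory Defs
  imports "HOL-Number_Theory.Number_Theory"
begin

definition T0inv :: "rat \<Rightarrow> rat" where
  "T0inv x = 2 * x"

definition T1inv :: "rat \<Rightarrow> rat" where
  "T1inv x = (2 * x - 1) / 3"

text \<open>A vector s = (s_0,...,s_k) is a nonempty list of naturals.
  v_s = T0^{-s_0} o T1^{-1} o T0^{-s_1} o ... o T1^{-1} o T0^{-s_k}.\<close>
fun vs :: "nat list \<Rightarrow> rat \<Rightarrow> rat" where
  "vs [] x = x"
| "vs [s0] x = (T0inv ^^ s0) x"
| "vs (s0 # rest) x = (T0inv ^^ s0) (T1inv (vs rest x))"

text \<open>length l(s) = k = number of T1^{-1} occurrences\<close>
definition len :: "nat list \<Rightarrow> nat" where
  "len s = length s - 1"

definition admissible :: "nat \<Rightarrow> nat list set" where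
  "admissible x = {s. s \<noteq> [] \<and> (\<exists>n::nat. n > 0 \<and> vs s (of_nat x) = of_nat n)}"

definition ord_three_halves :: "nat \<Rightarrow> nat" where
  "ord_three_halves b = ord b (3 * modular_inverse b 2)"

end

theory Submission
  imports Defs
begin


lemma T0pow: "(T0inv ^^ n) z = 2^n * z"
  by (induction n) (simp_all add: T0inv_def)

lemma vs_cons: "vs (h # t) y = 2^h * (if t = [] then y else T1inv (vs t y))"
  by (cases t) (simp_all add: T0pow)

definition Reach :: "nat \<Rightarrow> nat \<Rightarrow> int \<Rightarrow> bool" where
  "Reach x k Y \<longleftrightarrow> Y > 0 \<and> (\<exists>s. s \<noteq> [] \<and> len s \<le> k \<and> vs s (of_nat x) = of_int Y)"

lemma Reach_base: "x > 0 \<Longrightarrow> Reach x 0 (int x)"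
  unfolding Reach_def by (intro conjI exI[of _ "[0]"]) (auto simp: len_def)

lemma Reach_mono: "Reach x k Y \<Longrightarrow> k \<le> k' \<Longrightarrow> Reach x k' Y"
  unfolding Reach_def by fastforce

lemma Reach_double: "Reach x k Y \<Longrightarrow> Reach x k (2^j * Y)"
proof -
  assume "Reach x k Y"
  then obtain s where Y: "Y > 0" "s \<noteq> []" "len s \<le> k" "vs s (of_nat x) = of_int Y"
    unfolding Reach_def by blast
  then obtain h t where s: "s = h # t" by (cases s) auto
  have "vs ((h+j) # t) (of_nat x) = 2^j * vs s (of_nat x)"
    unfolding s vs_cons by (simp add: power_add)
  then show ?thesis unfolding Reach_def using Y s
    by (intro conjI exI[of _ "(h+j) # t"]) (auto simp: len_def)
qed

lemma Reach_step: "Reach x k Y \<Longrightarrow> Y mod 3 = 2 \<Longrightarrow> Reach x (k+1) ((2*Y - 1) div 3)"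
proof -
  assume R: "Reach x k Y" and m: "Y mod 3 = 2"
  then obtain s where Y: "Y > 0" "s \<noteq> []" "len s \<le> k" "vs s (of_nat x) = of_int Y"
    unfolding Reach_def by blast
  have d: "3 dvd (2*Y - 1)" using m by presburger
  then obtain z where z: "2*Y - 1 = 3 * z" by blast
  have zd: "(2*Y - 1) div 3 = z" using z by simp
  have "vs (0 # s) (of_nat x) = T1inv (of_int Y)"
    using Y by (simp add: vs_cons)
  also have "\<dots> = of_int z" unfolding T1inv_def
  proof -
    have "(2 * (of_int Y :: rat) - 1) = of_int (2*Y - 1)" by simp
    also have "\<dots> = 3 * of_int z" using z by simp
    finally show "(2 * (of_int Y :: rat) - 1) / 3 = of_int z" by simp
  qed
  finally have v: "vs (0 # s) (of_nat x) = of_int z" .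
  have "z > 0" using z Y m by presburger
  then show ?thesis unfolding Reach_def zd using v Y
    by (intro conjI exI[of _ "0 # s"]) (auto simp: len_def)
qed



lemma four_pow3: "\<exists>c::int. 4^(3^a) = 1 + 3^(a+1)*c \<and> c mod 3 = 1"
proof (induction a)
  case 0 then show ?case by (intro exI[of _ 1]) simp
next
  case (Suc a)
  then obtain c::int where c: "4^(3^a) = 1 + 3^(a+1)*c" "c mod 3 = 1" by blast
  define P::int where "P = 3^(a+1)"
  define Q::int where "Q = 3^(2*a+1)"
  have P2: "P*P = 3*Q" unfolding P_def Q_def by (simp flip: power_add)
  define c' where "c' = c + P*c^2 + Q*c^3"
  have "(4::int)^(3^Suc a) = (4^(3^a))^3" by (simp add: power_mult[symmetric] mult.commute)
  also have "\<dots> = (1 + P*c)^3" using c by (simp add: P_def)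
  also have "\<dots> = 1 + 3*P*c + 3*(P*P)*c^2 + (P*P)*P*c^3"
    by (simp add: power3_eq_cube power2_eq_square algebra_simps)
  also have "\<dots> = 1 + (3*P)*c'" unfolding c'_def
    using P2 by (simp add: power3_eq_cube power2_eq_square algebra_simps)
  also have "3*P = 3^(Suc a+1)" by (simp add: P_def)
  finally have 1: "(4::int)^(3^Suc a) = 1 + 3^(Suc a+1)*c'" .
  have "c' mod 3 = c mod 3" unfolding c'_def P_def Q_def
    by (simp add: power_add mod_add_eq[symmetric] mult.assoc)
  then show ?case using 1 c by auto
qed

lemma pow_expand:
  assumes "m \<ge> 1"
  shows "\<exists>z::int. (1 + 3^m*c)^n = 1 + 3^m*c*int n + 3^(m+1)*z"
proof (induction n)
  case 0 then show ?case by simp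
next
  case (Suc n)
  then obtain z where z: "(1 + 3^m*c)^n = 1 + 3^m*c*int n + 3^(m+1)*z" by blast
  have mm: "(3::int)^m * 3^m = 3^(m+1) * 3^(m-1)"
  proof -
    obtain k where "m = Suc k" using assms by (cases m) auto
    then show ?thesis by (simp add: power_add)
  qed
  define z' where "z' = z + 3^(m-1)*c*c*int n + z*3^m*c"
  have "(1 + 3^m*c)^(Suc n) = (1 + 3^m*c*int n + 3^(m+1)*z) * (1 + 3^m*c)" using z by simp
  also have "\<dots> = 1 + 3^m*c*int (Suc n) + 3^(m+1)*z + (3^m*3^m)*c*c*int n + 3^(m+1)*z*3^m*c"
    by (simp add: algebra_simps)
  also have "\<dots> = 1 + 3^m*c*int (Suc n) + 3^(m+1)*z'" unfolding mm z'_def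
    by (simp add: algebra_simps)
  finally show ?case by blast
qed

lemma decomp3: "n > 0 \<Longrightarrow> \<exists>a n'. n = 3^a * n' \<and> \<not> 3 dvd n'" for n :: nat
proof (induction n rule: less_induct)
  case (less n)
  show ?case
  proof (cases "3 dvd n")
    case False then show ?thesis by (intro exI[of _ 0] exI[of _ n]) simp
  next
    case True
    then obtain m where m: "n = 3*m" by blast
    with less.prems have "m > 0" "m < n" by auto
    with less.IH obtain a n' where "m = 3^a * n'" "\<not> 3 dvd n'" by blast
    then show ?thesis using m by (intro exI[of _ "Suc a"] exI[of _ n']) simp
  qed
qed

lemma lte_main:
  fixes T :: nat assumes "T > 0"
  shows "\<exists>M d. (4::int)^T = 1 + 3^M * d \<and> \<not> 3 dvd d \<and> M \<ge> 1 \<and> M \<le> T"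
proof -
  obtain a T' where T: "T = 3^a * T'" "\<not> 3 dvd T'" using decomp3[OF assms] by blast
  obtain c::int where c: "4^(3^a) = 1 + 3^(a+1)*c" "c mod 3 = 1" using four_pow3 by blast
  obtain z::int where z: "(1 + 3^(a+1)*c)^T' = 1 + 3^(a+1)*c*int T' + 3^(a+1+1)*z"
    using pow_expand[of "a+1" c T'] by auto
  have "(4::int)^T = (4^(3^a))^T'" using T by (simp add: power_mult)
  also have "\<dots> = 1 + 3^(a+1) * (c*int T' + 3*z)" using c z by (simp add: algebra_simps)
  finally have e: "(4::int)^T = 1 + 3^(a+1) * (c*int T' + 3*z)" .
  have nd: "\<not> 3 dvd (c*int T' + 3*z)"
  proof
    assume "3 dvd (c*int T' + 3*z)"
    then have "3 dvd c * int T'" by (simp add: dvd_add_left_iff)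
    moreover have "\<not> 3 dvd c" using c by presburger
    moreover have "\<not> (3::int) dvd int T'" using T by presburger
    ultimately show False using prime_dvd_mult_iff[of "3::int"] by auto
  qed
  have "T' > 0" using T assms by (cases T') auto
  have "a + 1 \<le> 3^a" by (induction a) auto
  also have "\<dots> \<le> T" using T \<open>T' > 0\<close> by simp
  finally show ?thesis using e nd by (intro exI[of _ "a+1"] exI[of _ "c*int T' + 3*z"]) auto
qed



definition Good :: "nat \<Rightarrow> int \<Rightarrow> nat \<Rightarrow> nat \<Rightarrow> int \<Rightarrow> nat \<Rightarrow> int \<Rightarrow> bool" where
  "Good x bb M k r j Y0 \<longleftrightarrow> (\<forall>u. (3::int)^j dvd (u - Y0) \<longrightarrow> \<not> 3 dvd u \<longrightarrow>
      (\<exists>Y. Reach x k Y \<and> bb dvd (Y - r) \<and> 3^M dvd (Y - u)))"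

lemma exists_t: "\<not> 3 dvd (D::int) \<Longrightarrow> \<exists>t::nat. t \<le> 2 \<and> 3 dvd (w + int t * D)"
proof -
  assume "\<not> 3 dvd D"
  then have "D mod 3 = 1 \<or> D mod 3 = 2" by presburger
  moreover have "w mod 3 = 0 \<or> w mod 3 = 1 \<or> w mod 3 = 2" by presburger
  moreover obtain p where p: "D = 3*p + D mod 3" by (metis mult_div_mod_eq)
  moreover obtain q where q: "w = 3*q + w mod 3" by (metis mult_div_mod_eq)
  ultimately show ?thesis
  proof (elim disjE)
    assume a: "D mod 3 = 1" "w mod 3 = 0" show ?thesis using a p q by (intro exI[of _ 0]) presburger
  next
    assume a: "D mod 3 = 1" "w mod 3 = 1" show ?thesis using a p q by (intro exI[of _ 2]) presburger
  next
    assume a: "D mod 3 = 1" "w mod 3 = 2" show ?thesis using a p q by (intro exI[of _ 1]) presburger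
  next
    assume a: "D mod 3 = 2" "w mod 3 = 0" show ?thesis using a p q by (intro exI[of _ 0]) presburger
  next
    assume a: "D mod 3 = 2" "w mod 3 = 1" show ?thesis using a p q by (intro exI[of _ 1]) presburger
  next
    assume a: "D mod 3 = 2" "w mod 3 = 2" show ?thesis using a p q by (intro exI[of _ 2]) presburger
  qed
qed

lemma step_lemma:
  assumes G: "Good x bb M k r j Y0" and jM: "j \<le> M" and M1: "M \<ge> 1"
    and Td: "(4::int)^T = 1 + 3^M * d" and nd: "\<not> 3 dvd d"
    and Tb: "bb dvd (4^T - 1)" and cb: "coprime bb 3"
    and pre: "j \<ge> 1 \<longrightarrow> 3 dvd (2^(s+1)*Y0 - 1)"
    and rr: "bb dvd (3*r' + 1 - 2^(s+1)*r)"
  shows "Good x bb M (k+1) r' (j-1) ((2^(s+1)*Y0 - 1) div 3)"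
  unfolding Good_def
proof (intro allI impI)
  fix u' :: int
  define Y0' where "Y0' = (2^(s+1)*Y0 - 1) div 3"
  assume hu: "3^(j-1) dvd (u' - (2^(s+1)*Y0 - 1) div 3)" and nu: "\<not> 3 dvd u'"
  define V where "V = 3*u' + 1"
  have cop: "coprime ((2::int)^(s+1)) (3^M)" by simp
  obtain iP where iP: "[2^(s+1) * iP = 1] (mod (3::int)^M)"
    using cong_solve_coprime_int[OF cop] by blast
  define u where "u = V * iP"
  have A: "(3::int)^M dvd (2^(s+1)*u - V)"
  proof -
    have "(3::int)^M dvd (2^(s+1)*iP - 1)" using iP by (simp add: cong_iff_dvd_diff)
    then have "(3::int)^M dvd V * (2^(s+1)*iP - 1)" by simp
    then show ?thesis unfolding u_def by (simp add: algebra_simps)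
  qed
  have B: "(3::int)^j dvd (u - Y0)"
  proof (cases "j = 0")
    case True then show ?thesis by simp
  next
    case False
    then have d3: "3 dvd (2^(s+1)*Y0 - 1)" using pre by simp
    then have e3: "3 * Y0' + 1 = 2^(s+1)*Y0" unfolding Y0'_def by auto
    have "(3::int)^j dvd 3^M" using jM by (simp add: le_imp_power_dvd)
    with A have a1: "(3::int)^j dvd (2^(s+1)*u - V)" by (rule dvd_trans[rotated])
    have "(3::int)^j = 3 * 3^(j-1)" using False by (cases j) auto
    moreover have "V - 2^(s+1)*Y0 = 3 * (u' - Y0')" unfolding V_def e3[symmetric] by simp
    moreover have "3 * 3^(j-1) dvd 3 * (u' - Y0')" using hu unfolding Y0'_def by (rule mult_dvd_mono[OF dvd_refl])
    ultimately have a2: "(3::int)^j dvd (V - 2^(s+1)*Y0)" by simp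
    have "(3::int)^j dvd (2^(s+1)*u - V) + (V - 2^(s+1)*Y0)" using a1 a2 by (rule dvd_add)
    then have "(3::int)^j dvd 2^(s+1) * (u - Y0)" by (simp add: algebra_simps)
    moreover have "coprime ((3::int)^j) (2^(s+1))" by simp
    ultimately show ?thesis using coprime_dvd_mult_right_iff by blast
  qed
  have C: "\<not> 3 dvd u"
  proof
    assume "3 dvd u"
    moreover have "(3::int) dvd (2^(s+1)*u - V)"
    proof -
      have "(3::int) dvd 3^M" using M1 by (cases M) auto
      then show ?thesis using A by (rule dvd_trans)
    qed
    ultimately have "(3::int) dvd V" proof -
      have "(3::int) dvd 2^(s+1)*u" using \<open>3 dvd u\<close> by simp
      from dvd_diff[OF this \<open>(3::int) dvd (2^(s+1)*u - V)\<close>] show ?thesis by simp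
    qed
    then show False unfolding V_def by presburger
  qed
  obtain Y where Y: "Reach x k Y" "bb dvd (Y - r)" "3^M dvd (Y - u)"
    using G B C unfolding Good_def by blast
  have "(3::int)^M dvd 2^(s+1)*(Y - u) + (2^(s+1)*u - V)" using Y(3) A by simp
  then obtain w where w: "2^(s+1)*Y = V + 3^M*w" by (auto simp: algebra_simps elim!: dvdE)
  have ndV: "\<not> 3 dvd (d * V)"
  proof
    assume "3 dvd d * V"
    then have "3 dvd d \<or> (3::int) dvd V" using prime_dvd_mult_iff[of "3::int"] by auto
    then show False using nd unfolding V_def by presburger
  qed
  obtain t where t: "t \<le> 2" "3 dvd (w + int t * (d * V))" using exists_t[OF ndV] by blast
  obtain \<rho> where rho: "(1 + 3^M*d)^t = 1 + 3^M*d*int t + 3^(M+1)*\<rho>"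
    using pow_expand[OF M1] by blast
  define X where "X = 2^(2*T*t + s) * Y"
  have RX: "Reach x k X" unfolding X_def by (rule Reach_double[OF Y(1)])
  have pw: "(2::int)^(2*T*t) = (4^T)^t" by (simp add: power_mult)
  have X2: "2*X = (4^T)^t * (2^(s+1)*Y)" unfolding X_def pw[symmetric]
    by (simp add: power_add algebra_simps)
  obtain K where K: "w + int t * (d * V) = 3*K" using t(2) by blast
  have MM: "(3::int)^M * 3^M = 3^(M+1) * 3^(M-1)"
  proof -
    obtain m where "M = Suc m" using M1 by (cases M) auto
    then show ?thesis by (simp add: power_add)
  qed
  have "2*X = (1 + 3^M*d*int t + 3^(M+1)*\<rho>) * (V + 3^M*w)" unfolding X2 Td rho w ..
  also have "\<dots> = V + 3^M*(w + int t*(d*V)) + 3^(M+1)*(\<rho>*V + \<rho>*3^M*w) + (3^M*3^M)*d*int t*w"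
    by (simp add: algebra_simps)
  also have "\<dots> = V + 3^(M+1)*(K + \<rho>*V + \<rho>*3^M*w + 3^(M-1)*d*int t*w)"
    unfolding K MM by (simp add: algebra_simps)
  finally have X2': "2*X = 3*u' + 1 + 3^(M+1)*(K + \<rho>*V + \<rho>*3^M*w + 3^(M-1)*d*int t*w)"
    unfolding V_def .
  define KK where "KK = K + \<rho>*V + \<rho>*3^M*w + 3^(M-1)*d*int t*w"
  have X2'': "2*X - 1 = 3 * (u' + 3^M * KK)" using X2' unfolding KK_def by (simp add: algebra_simps)
  have Xm: "X mod 3 = 2" using X2'' by presburger
  have Ydef: "(2*X - 1) div 3 = u' + 3^M*KK" using X2'' by simp
  have R': "Reach x (k+1) (u' + 3^M*KK)" using Reach_step[OF RX Xm] Ydef by simp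
  have m3: "(3::int)^M dvd (u' + 3^M*KK - u')" by simp
  have "[(4::int)^T = 1] (mod bb)" using Tb by (simp add: cong_iff_dvd_diff)
  then have "[((4::int)^T)^t = 1^t] (mod bb)" by (rule cong_pow)
  then have b1: "bb dvd (((4::int)^T)^t - 1)" by (simp add: cong_iff_dvd_diff)
  define Y' where "Y' = u' + 3^M*KK"
  have e1: "3 * (Y' - r') = (((4::int)^T)^t - 1) * (2^(s+1)*Y) + 2^(s+1)*(Y - r) - (3*r' + 1 - 2^(s+1)*r)"
    using X2'' X2 unfolding Y'_def by (simp add: algebra_simps)
  have "bb dvd (((4::int)^T)^t - 1) * (2^(s+1)*Y) + 2^(s+1)*(Y - r) - (3*r' + 1 - 2^(s+1)*r)"
  proof -
    have 1: "bb dvd (((4::int)^T)^t - 1) * (2^(s+1)*Y)" using b1 by (rule dvd_mult2)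
    have 2: "bb dvd 2^(s+1)*(Y - r)" using Y(2) by (rule dvd_mult)
    show ?thesis using dvd_diff[OF dvd_add[OF 1 2] rr] .
  qed
  then have "bb dvd 3 * (Y' - r')" unfolding e1 .
  then have bd: "bb dvd (Y' - r')" using cb coprime_dvd_mult_right_iff by blast
  show "\<exists>Y. Reach x (k + 1) Y \<and> bb dvd Y - r' \<and> 3 ^ M dvd Y - u'"
    using R' bd m3 unfolding Y'_def by blast
qed



lemma Good_j0: "Good x bb M k r 0 Y0 \<longleftrightarrow> Good x bb M k r 0 Z"
  unfolding Good_def by simp

lemma Good_mono: "Good x bb M k r j Y0 \<Longrightarrow> k \<le> k' \<Longrightarrow> Good x bb M k' r j Y0"
  unfolding Good_def using Reach_mono by blast

lemma Good_cong: "Good x bb M k r j Y0 \<Longrightarrow> bb dvd (r - r2) \<Longrightarrow> Good x bb M k r2 j Y0"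
  unfolding Good_def
proof (intro allI impI)
  fix u assume H: "\<forall>u. 3 ^ j dvd u - Y0 \<longrightarrow> \<not> 3 dvd u \<longrightarrow> (\<exists>Y. Reach x k Y \<and> bb dvd Y - r \<and> 3 ^ M dvd Y - u)"
    and d: "bb dvd (r - r2)" and u: "3 ^ j dvd u - Y0" "\<not> 3 dvd u"
  then obtain Y where Y: "Reach x k Y" "bb dvd Y - r" "3 ^ M dvd Y - u" by blast
  have "bb dvd (Y - r) + (r - r2)" using Y(2) d by (rule dvd_add)
  then show "\<exists>Y. Reach x k Y \<and> bb dvd Y - r2 \<and> 3 ^ M dvd Y - u" using Y by auto
qed

lemma Good_double:
  assumes G: "Good x bb M k r 0 Y0" and M1: "M \<ge> 1"
  shows "Good x bb M k (2*r) 0 Z"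
  unfolding Good_def
proof (intro allI impI)
  fix u' :: int assume nu: "\<not> 3 dvd u'"
  have cop: "coprime (2::int) (3^M)" by simp
  obtain i2 where i2: "[2 * i2 = 1] (mod (3::int)^M)"
    using cong_solve_coprime_int[OF cop] by blast
  have A: "(3::int)^M dvd (2*i2 - 1)" using i2 by (simp add: cong_iff_dvd_diff)
  define u where "u = u' * i2"
  have A2: "(3::int)^M dvd (2*u - u')"
  proof -
    have "(3::int)^M dvd u' * (2*i2 - 1)" using A by simp
    then show ?thesis unfolding u_def by (simp add: algebra_simps)
  qed
  have nu2: "\<not> 3 dvd u"
  proof
    assume "3 dvd u"
    then have "(3::int) dvd 2*u" by simp
    moreover have "(3::int) dvd 3^M" using M1 by (cases M) auto
    then have "(3::int) dvd (2*u - u')" using A2 by (rule dvd_trans)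
    ultimately have "(3::int) dvd 2*u - (2*u - u')" by (rule dvd_diff)
    then show False using nu by simp
  qed
  obtain Y where Y: "Reach x k Y" "bb dvd (Y - r)" "3^M dvd (Y - u)"
    using G nu2 unfolding Good_def by auto
  have R: "Reach x k (2^1 * Y)" by (rule Reach_double[OF Y(1)])
  have "bb dvd 2 * (Y - r)" using Y(2) by (rule dvd_mult)
  moreover have "(3::int)^M dvd 2*(Y - u) + (2*u - u')" by (rule dvd_add[OF dvd_mult[OF Y(3)] A2])
  then have "(3::int)^M dvd 2*Y - u'" by (simp add: algebra_simps)
  ultimately show "\<exists>Y. Reach x k Y \<and> bb dvd Y - 2 * r \<and> 3 ^ M dvd Y - u'"
    using R by (intro exI[of _ "2*Y"]) (auto simp: algebra_simps)
qed

lemma mod9_choice: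
  assumes "\<not> 3 dvd (Y0::int)"
  shows "\<exists>s::nat. 9 dvd (2^(s+1)*Y0 - 4)"
proof -
  obtain q where q: "Y0 = 9*q + Y0 mod 9" by (metis mult_div_mod_eq)
  have "Y0 mod 9 = 1 \<or> Y0 mod 9 = 2 \<or> Y0 mod 9 = 4 \<or> Y0 mod 9 = 5 \<or> Y0 mod 9 = 7 \<or> Y0 mod 9 = 8" using assms by presburger
  then show ?thesis
  proof (elim disjE)
    assume a: "Y0 mod 9 = 1"
    have "Y0 = 9*q + 1" using q a by simp
    then show ?thesis by (intro exI[of _ 1]) (simp add: algebra_simps; presburger)
  next
    assume a: "Y0 mod 9 = 2"
    have "Y0 = 9*q + 2" using q a by simp
    then show ?thesis by (intro exI[of _ 0]) (simp add: algebra_simps; presburger)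
  next
    assume a: "Y0 mod 9 = 4"
    have "Y0 = 9*q + 4" using q a by simp
    then show ?thesis by (intro exI[of _ 5]) (simp add: algebra_simps; presburger)
  next
    assume a: "Y0 mod 9 = 5"
    have "Y0 = 9*q + 5" using q a by simp
    then show ?thesis by (intro exI[of _ 2]) (simp add: algebra_simps; presburger)
  next
    assume a: "Y0 mod 9 = 7"
    have "Y0 = 9*q + 7" using q a by simp
    then show ?thesis by (intro exI[of _ 3]) (simp add: algebra_simps; presburger)
  next
    assume a: "Y0 mod 9 = 8"
    have "Y0 = 9*q + 8" using q a by simp
    then show ?thesis by (intro exI[of _ 4]) (simp add: algebra_simps; presburger)
  qed
qed



locale CS =
  fixes x :: nat and bb :: int and M T :: nat and d :: int and f :: nat
  assumes x0: "x > 0" and x3: "\<not> 3 dvd int x"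
    and bb1: "bb > 1" and cb3: "coprime bb 3" and cb2: "coprime bb 2"
    and M1: "M \<ge> 1" and Td: "(4::int)^T = 1 + 3^M*d" and nd: "\<not> 3 dvd d"
    and Tb: "bb dvd (4^T - 1)" and T1: "T \<ge> 1"
    and f1: "f \<ge> 1" and fb: "bb dvd (3^f - 2^f)"
begin

lemma inv3: "\<exists>i3. bb dvd (3*i3 - 1)"
proof -
  have "coprime 3 bb" using cb3 by (simp add: coprime_commute)
  then obtain i where "[3 * i = 1] (mod bb)" using cong_solve_coprime_int by blast
  then show ?thesis by (auto simp: cong_iff_dvd_diff)
qed

lemma inv6: "\<exists>c. bb dvd (6*c - 1)"
proof -
  have "coprime 6 bb" using cb3 cb2
    by (metis coprime_commute coprime_mult_right_iff mult_2_right numeral_Bit0 numeral_times_numeral numerals(1) mult.commute)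
  then obtain i where "[6 * i = 1] (mod bb)" using cong_solve_coprime_int by blast
  then show ?thesis by (auto simp: cong_iff_dvd_diff)
qed

lemma phase1: "i \<le> M \<Longrightarrow> \<exists>r Y0. \<not> 3 dvd Y0 \<and> Good x bb M i r (M - i) Y0"
proof (induction i)
  case 0
  have "Good x bb M 0 (int x) M (int x)"
    unfolding Good_def
  proof (intro allI impI)
    fix u assume "(3::int)^M dvd u - int x"
    then have "(3::int)^M dvd int x - u" by (simp add: dvd_diff_commute)
    then show "\<exists>Y. Reach x 0 Y \<and> bb dvd Y - int x \<and> 3 ^ M dvd Y - u"
      using Reach_base[OF x0] by auto
  qed
  then show ?case using x3 by auto
next
  case (Suc i)
  then obtain r Y0 where H: "\<not> 3 dvd Y0" "Good x bb M i r (M - i) Y0" by auto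
  obtain s where s: "9 dvd (2^(s+1)*Y0 - 4)" using mod9_choice[OF H(1)] by blast
  then obtain m where m: "2^(s+1)*Y0 = 9*m + 4" by (auto elim!: dvdE simp: algebra_simps)
  obtain i3 where i3: "bb dvd (3*i3 - 1)" using inv3 by blast
  define r' where "r' = (2^(s+1)*r - 1)*i3"
  have rr: "bb dvd (3*r' + 1 - 2^(s+1)*r)"
  proof -
    have "3*r' + 1 - 2^(s+1)*r = (2^(s+1)*r - 1)*(3*i3 - 1)" unfolding r'_def by (simp add: algebra_simps)
    then show ?thesis using i3 by simp
  qed
  have pre: "M - i \<ge> 1 \<longrightarrow> 3 dvd (2^(s+1)*Y0 - 1)" using m by presburger
  have G: "Good x bb M (i+1) r' (M - i - 1) ((2^(s+1)*Y0 - 1) div 3)"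
    using step_lemma[OF H(2) _ M1 Td nd Tb cb3 pre rr] by simp
  have "(2^(s+1)*Y0 - 1) div 3 = 3*m + 1" using m by simp
  then have "\<not> 3 dvd ((2^(s+1)*Y0 - 1) div 3)" by presburger
  moreover have "M - Suc i = M - i - 1" by simp
  ultimately show ?case using G by auto
qed

definition P :: "nat \<Rightarrow> int \<Rightarrow> bool" where "P k r \<longleftrightarrow> Good x bb M k r 0 0"

lemma P_start: "\<exists>r. P M r"
proof -
  obtain r Y0 where "Good x bb M M r 0 Y0" using phase1[of M] by auto
  then have "Good x bb M M r 0 0" using Good_j0 by metis
  then show ?thesis unfolding P_def by blast
qed

lemma P_double: "P k r \<Longrightarrow> P k (2*r)"
  unfolding P_def using Good_double[OF _ M1] by blast

lemma P_pow: "P k r \<Longrightarrow> P k (2^n*r)"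
proof (induction n)
  case 0 then show ?case by simp
next
  case (Suc n) then show ?case using P_double[of k "2^n*r"] by (simp add: mult.assoc)
qed

lemma P_step: "P k r \<Longrightarrow> bb dvd (3*r' + 1 - 2*r) \<Longrightarrow> P (k+1) r'"
proof -
  assume a: "P k r" "bb dvd (3*r' + 1 - 2*r)"
  have "Good x bb M (k+1) r' (0-1) ((2^(0+1)*0 - 1) div 3)"
    using step_lemma[of x bb M k r 0 0 T d 0 r'] M1 Td nd Tb cb3 a unfolding P_def by simp
  then have "Good x bb M (k+1) r' 0 0" using Good_j0 by (metis diff_0_eq_0)
  then show ?thesis unfolding P_def .
qed

lemma P_mono: "P k r \<Longrightarrow> k \<le> k' \<Longrightarrow> P k' r"
  unfolding P_def using Good_mono by blast

lemma P_cong: "P k r \<Longrightarrow> bb dvd (r - r2) \<Longrightarrow> P k r2"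
  unfolding P_def using Good_cong by blast

definition closed :: "nat \<Rightarrow> bool" where
  "closed k \<longleftrightarrow> (\<forall>r r'. P k r \<longrightarrow> bb dvd (3*r' + 1 - 2*r) \<longrightarrow> P k r')"

lemma iter:
  assumes c: "closed k" and p: "P k r0"
  shows "\<exists>r1. P k r1 \<and> bb dvd (3^j*(r1+1) - 2^j*(r0+1))"
proof (induction j)
  case 0 then show ?case using p by (intro exI[of _ r0]) simp
next
  case (Suc j)
  then obtain r1 where r1: "P k r1" "bb dvd (3^j*(r1+1) - 2^j*(r0+1))" by blast
  obtain i3 where i3: "bb dvd (3*i3 - 1)" using inv3 by blast
  define r' where "r' = (2*r1 - 1)*i3"
  have rr: "bb dvd (3*r' + 1 - 2*r1)"
  proof -
    have "3*r' + 1 - 2*r1 = (2*r1 - 1)*(3*i3 - 1)" unfolding r'_def by (simp add: algebra_simps)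
    then show ?thesis using i3 by simp
  qed
  have Pr': "P k r'" using c r1(1) rr unfolding closed_def by blast
  have e: "3^Suc j*(r'+1) - 2^Suc j*(r0+1) = 3^j*(3*r' + 1 - 2*r1) + 2*(3^j*(r1+1) - 2^j*(r0+1))"
    by (simp add: algebra_simps)
  have "bb dvd 3^j*(3*r' + 1 - 2*r1) + 2*(3^j*(r1+1) - 2^j*(r0+1))"
    by (rule dvd_add[OF dvd_mult[OF rr] dvd_mult[OF r1(2)]])
  then show ?case using Pr' unfolding e[symmetric] by blast
qed

lemma translate:
  assumes c: "closed k" and p: "P k r0"
  shows "\<exists>r4. P k r4 \<and> bb dvd (6*r4 - 6*r0 - 1)"
proof -
  obtain r1 where r1: "P k r1" "bb dvd (3^(f-1)*(r1+1) - 2^(f-1)*(r0+1))"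
    using iter[OF c p] by blast
  have f3: "(3::int)^f = 3*3^(f-1)" and f2: "(2::int)^f = 2*2^(f-1)" using f1
    by (cases f; simp)+
  have e1: "2^(f-1)*(2*(r1+1) - 3*(r0+1)) = -((3^f - 2^f)*(r1+1)) + 3*(3^(f-1)*(r1+1) - 2^(f-1)*(r0+1))"
    unfolding f3 f2 by (simp add: algebra_simps)
  have "bb dvd -((3^f - 2^f)*(r1+1)) + 3*(3^(f-1)*(r1+1) - 2^(f-1)*(r0+1))"
    by (rule dvd_add[OF _ dvd_mult[OF r1(2)]]) (simp add: fb)
  then have "bb dvd 2^(f-1)*(2*(r1+1) - 3*(r0+1))" unfolding e1 .
  moreover have "coprime bb (2^(f-1))" using cb2 by simp
  ultimately have E2: "bb dvd (2*(r1+1) - 3*(r0+1))" using coprime_dvd_mult_right_iff by blast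
  have P2: "P k (2*r1)" using P_double[OF r1(1)] .
  obtain i3 where i3: "bb dvd (3*i3 - 1)" using inv3 by blast
  define r3 where "r3 = (2*(2*r1) - 1)*i3"
  have rr: "bb dvd (3*r3 + 1 - 2*(2*r1))"
  proof -
    have "3*r3 + 1 - 2*(2*r1) = (2*(2*r1) - 1)*(3*i3 - 1)" unfolding r3_def by (simp add: algebra_simps)
    then show ?thesis using i3 by simp
  qed
  have P3: "P k r3" using c P2 rr unfolding closed_def by blast
  define r4 where "r4 = 2^(2*T-1)*r3"
  have P4: "P k r4" unfolding r4_def using P_pow[OF P3] .
  have t4: "(2::int)*2^(2*T-1) = 4^T"
  proof -
    have "2*T - 1 + 1 = 2*T" using T1 by simp
    then have "(2::int)*2^(2*T-1) = 2^(2*T)" by (metis power_Suc mult.commute Suc_eq_plus1)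
    also have "\<dots> = 4^T" by (simp add: power_mult)
    finally show ?thesis .
  qed
  have e2: "6*r4 - 6*r0 - 1 = 3*((4^T - 1)*r3) + (3*r3 + 1 - 2*(2*r1)) + 2*(2*(r1+1) - 3*(r0+1))"
  proof -
    have "6*r4 = 3*(2*2^(2*T-1))*r3" unfolding r4_def by simp
    also have "\<dots> = 3*4^T*r3" using t4 by simp
    finally show ?thesis by (simp add: algebra_simps)
  qed
  have "bb dvd 3*((4^T - 1)*r3) + (3*r3 + 1 - 2*(2*r1)) + 2*(2*(r1+1) - 3*(r0+1))"
    by (rule dvd_add[OF dvd_add[OF dvd_mult[OF dvd_mult2[OF Tb]] rr] dvd_mult[OF E2]])
  then show ?thesis using P4 unfolding e2[symmetric] by blast
qed

end


context CS begin

lemma moddvd: "(m::int) dvd (a mod m - a)"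
proof -
  have "a mod m - a = m * (- (a div m))" using div_mult_mod_eq[of a m] by (simp add: algebra_simps)
  then show ?thesis by simp
qed

lemma cop6: "coprime bb 6"
proof -
  have "coprime bb (2*3)" by (rule iffD2[OF coprime_mult_right_iff]) (use cb2 cb3 in blast)
  moreover have eq: "(2*3::int) = 6" by simp
  ultimately show ?thesis by simp
qed

lemma shift:
  assumes c: "closed k" and p: "P k r" and cc: "bb dvd (6*cc - 1)"
  shows "P k (r + cc)"
proof -
  obtain r4 where r4: "P k r4" "bb dvd (6*r4 - 6*r - 1)" using translate[OF c p] by blast
  have e: "6*(r4 - (r + cc)) = (6*r4 - 6*r - 1) - (6*cc - 1)" by (simp add: algebra_simps)
  have "bb dvd (6*r4 - 6*r - 1) - (6*cc - 1)" using r4(2) cc by (rule dvd_diff)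
  then have "bb dvd 6*(r4 - (r + cc))" unfolding e .
  then have "bb dvd (r4 - (r + cc))" using cop6 coprime_dvd_mult_right_iff by blast
  then show ?thesis using P_cong[OF r4(1)] by blast
qed

lemma all_from_closed:
  assumes c: "closed k" and p: "P k r0"
  shows "P k a"
proof -
  obtain cc where cc: "bb dvd (6*cc - 1)" using inv6 by blast
  have sh: "P k (r0 + int m * cc)" for m
  proof (induction m)
    case 0 then show ?case using p by simp
  next
    case (Suc m)
    from shift[OF c Suc cc] show ?case by (simp add: algebra_simps)
  qed
  define m where "m = nat ((6*(a - r0)) mod bb)"
  have mi: "int m = (6*(a - r0)) mod bb" unfolding m_def using bb1 by simp
  have d1: "bb dvd (int m - 6*(a - r0))" unfolding mi by (rule moddvd)
  have "r0 + int m * cc - a = cc*(int m - 6*(a - r0)) + (6*cc - 1)*(a - r0)" by (simp add: algebra_simps)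
  moreover have "bb dvd cc*(int m - 6*(a - r0)) + (6*cc - 1)*(a - r0)"
    by (rule dvd_add[OF dvd_mult[OF d1] dvd_mult2[OF cc]])
  ultimately have "bb dvd (r0 + int m * cc - a)" by simp
  then show ?thesis using P_cong[OF sh[of m]] by blast
qed

definition S :: "nat \<Rightarrow> int set" where "S k = {r. 0 \<le> r \<and> r < bb \<and> P k r}"

lemma S_sub: "S k \<subseteq> {0..<bb}" unfolding S_def by auto

lemma S_fin: "finite (S k)" using S_sub finite_subset by blast

lemma grow:
  assumes p: "P k r0"
  shows "(\<forall>a. P k a) \<or> card (S k) < card (S (k+1))"
proof (cases "closed k")
  case True then show ?thesis using all_from_closed p by blast
next
  case False
  then obtain r r' where rr: "P k r" "bb dvd (3*r' + 1 - 2*r)" "\<not> P k r'"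
    unfolding closed_def by blast
  have P1: "P (k+1) r'" using P_step[OF rr(1,2)] .
  define r'' where "r'' = r' mod bb"
  have dd: "bb dvd (r' - r'')"
  proof -
    have "bb dvd (r'' - r')" unfolding r''_def by (rule moddvd)
    then show ?thesis by (simp add: dvd_diff_commute)
  qed
  have dd2: "bb dvd (r'' - r')" using dd by (simp add: dvd_diff_commute)
  have in1: "r'' \<in> S (k+1)"
  proof -
    have "P (k+1) r''" using P_cong[OF P1 dd] .
    moreover have "0 \<le> r''" "r'' < bb" unfolding r''_def using bb1 by simp_all
    ultimately show ?thesis unfolding S_def by blast
  qed
  have nin: "r'' \<notin> S k"
  proof
    assume "r'' \<in> S k"
    then have "P k r''" unfolding S_def by blast
    from P_cong[OF this dd2] rr(3) show False by blast
  qed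
  have sub: "S k \<subseteq> S (k+1)" unfolding S_def using P_mono by auto
  have "S k \<subset> S (k+1)" using sub in1 nin by blast
  then show ?thesis using psubset_card_mono[OF S_fin] by blast
qed

lemma growth_all:
  assumes p: "P k0 r0"
  shows "(\<forall>a. P (k0 + j) a) \<or> j + 1 \<le> card (S (k0 + j))"
proof (induction j)
  case 0
  have "bb dvd (r0 - r0 mod bb)" using moddvd[of bb r0] by (simp add: dvd_diff_commute)
  then have "r0 mod bb \<in> S k0" unfolding S_def using P_cong[OF p, of "r0 mod bb"] bb1
    by simp
  then have "card (S k0) \<noteq> 0" using S_fin by auto
  then show ?case by simp
next
  case (Suc j)
  show ?case
  proof (cases "\<forall>a. P (k0 + j) a")
    case True
    have "P (k0 + Suc j) a" for a using P_mono[of "k0+j" a "k0+Suc j"] True by simp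
    then show ?thesis by blast
  next
    case False
    with Suc.IH have c: "j + 1 \<le> card (S (k0 + j))" by blast
    have "P (k0 + j) r0" using P_mono[OF p] by simp
    from grow[OF this] False have "card (S (k0 + j)) < card (S (k0 + j + 1))" by blast
    with c show ?thesis by simp
  qed
qed

lemma final_all:
  assumes p: "P k0 r0"
  shows "P (k0 + (nat bb - 1)) a"
proof -
  have "(\<forall>a. P (k0 + (nat bb - 1)) a) \<or> nat bb - 1 + 1 \<le> card (S (k0 + (nat bb - 1)))"
    using growth_all[OF p] .
  then show ?thesis
  proof
    assume "\<forall>a. P (k0 + (nat bb - 1)) a" then show ?thesis by blast
  next
    assume c: "nat bb - 1 + 1 \<le> card (S (k0 + (nat bb - 1)))"
    have cb: "card {0..<bb} = nat bb" by simp
    have "card {0..<bb} \<le> card (S (k0 + (nat bb - 1)))" using c bb1 cb by simp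
    then have eq: "S (k0 + (nat bb - 1)) = {0..<bb}"
      by (rule card_seteq[OF finite_atLeastLessThan_int S_sub])
    have "a mod bb \<in> {0..<bb}" using bb1 by simp
    then have "P (k0 + (nat bb - 1)) (a mod bb)" using eq unfolding S_def by blast
    moreover have "bb dvd (a mod bb - a)" by (rule moddvd)
    ultimately show ?thesis using P_cong by blast
  qed
qed

lemma main_locale: "P (M + (nat bb - 1)) a"
  using P_start final_all by blast

end


theorem mainTheorem5:
  fixes b a x :: nat
  assumes "b > 0" and "coprime b 6" and "a < b"
    and "x > 0" and "coprime x 3"
  shows "\<exists>s \<in> admissible x. \<exists>n::nat. vs s (of_nat x) = of_nat n \<and>
            [n = a] (mod b) \<and> \<not> [n = 0] (mod 3) \<and>
            len s \<le> (b - 1) * ord_three_halves b"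
proof -
  have x3n: "\<not> 3 dvd x" using assms(5)
    by (metis coprime_absorb_right coprime_commute nat_dvd_1_iff_1 numeral_eq_one_iff semiring_norm(86))
  show ?thesis
  proof (cases "b = 1")
    case True
    have "vs [0] (of_nat x) = of_nat x" by simp
    moreover have "[0] \<in> admissible x" unfolding admissible_def using assms(4) by auto
    moreover have "len [0] = 0" by (simp add: len_def)
    moreover have "[x = a] (mod b)" using True by simp
    moreover have "\<not> [x = 0] (mod 3)" using x3n by (simp add: cong_0_iff)
    ultimately show ?thesis by fastforce
  next
    case False
    then have b1: "b > 1" using assms(1) by simp
    have eq6: "(2*3::nat) = 6" by simp
    have cb6: "coprime b (2*3)" unfolding eq6 by (rule assms(2))
    then have cb2n: "coprime b 2" and cb3n: "coprime b 3" using coprime_mult_right_iff by blast+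
    define bb where "bb = int b"
    have bb1: "bb > 1" using b1 unfolding bb_def by simp
    have cb2: "coprime bb 2" unfolding bb_def using cb2n by (metis coprime_int_iff of_nat_numeral)
    have cb3: "coprime bb 3" unfolding bb_def using cb3n by (metis coprime_int_iff of_nat_numeral)
    define T where "T = totient b"
    have T1: "T \<ge> 1" unfolding T_def using assms(1) by (simp add: Suc_le_eq)
    have Tb_lt: "T < b" unfolding T_def using totient_less[OF b1] .
    have c2b: "coprime (2::nat) b" using cb2n by (metis coprime_commute)
    have "[2 ^ T = 1] (mod b)" unfolding T_def using euler_theorem[OF c2b] .
    then have "[2^T * 2^T = 1 * 1] (mod b)" using cong_mult by blast
    then have "[4^T = 1] (mod b)" by (simp add: power_mult_distrib[symmetric])
    then have "[int (4^T) = int 1] (mod int b)" by (simp only: cong_int_iff)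
    then have Tb: "bb dvd (4^T - 1)" unfolding bb_def by (simp add: cong_iff_dvd_diff)
    obtain M d where Md: "(4::int)^T = 1 + 3^M * d" "\<not> 3 dvd d" "M \<ge> 1" "M \<le> T"
      using lte_main[of T] T1 by auto
    define i2 where "i2 = modular_inverse (int b) 2"
    define Q where "Q = 3 * i2"
    define f where "f = ord_three_halves b"
    have fQ: "f = ord (int b) Q" unfolding f_def ord_three_halves_def Q_def i2_def ..
    have c2: "coprime 2 (int b)" using cb2 unfolding bb_def by (metis coprime_commute)
    have i2c: "[2 * i2 = 1] (mod int b)" unfolding i2_def
      by (rule cong_modular_inverse1[OF c2])
    have ci2: "coprime i2 (int b)" unfolding i2_def
      by (rule coprime_modular_inverse[OF c2])
    have cQ: "coprime (int b) Q" unfolding Q_def using cb3 ci2 unfolding bb_def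
      by (simp add: coprime_commute)
    define q where "q = nat (Q mod int b)"
    have qQ: "int q = Q mod int b" unfolding q_def using assms(1) by simp
    have cqQ: "[Q = int q] (mod int b)" unfolding qQ by (simp add: cong_def)
    have "coprime (int b) (Q mod int b)" using cQ assms(1) by (simp add: coprime_mod_right_iff)
    then have "coprime (int b) (int q)" unfolding qQ .
    then have "coprime q b" by (simp add: coprime_commute)
    then have "[q ^ T = 1] (mod b)" unfolding T_def by (rule euler_theorem)
    then have "[int q ^ T = int 1] (mod int b)" by (metis cong_int_iff of_nat_power)
    moreover have "[Q ^ T = int q ^ T] (mod int b)" using cqQ by (rule cong_pow)
    ultimately have QT: "[Q ^ T = 1] (mod int b)" using cong_trans by fastforce
    have ex: "\<exists>dd. dd > 0 \<and> [Q ^ dd = 1] (mod int b)" using QT T1 by (intro exI[of _ T]) simp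
    have fl: "f = (LEAST dd. dd > 0 \<and> [Q ^ dd = 1] (mod int b))" unfolding fQ ord_def using cQ by simp
    have fprop: "f > 0 \<and> [Q ^ f = 1] (mod int b)" unfolding fl by (rule LeastI_ex[OF ex])
    then have f0: "f \<noteq> 0" and Qf: "[Q ^ f = 1] (mod int b)" by auto
    have Q2: "[2 * Q = 3] (mod int b)"
    proof -
      have "[3 * (2 * i2) = 3 * 1] (mod int b)" using i2c by (rule cong_scalar_left)
      then show ?thesis unfolding Q_def by (simp add: algebra_simps)
    qed
    have f2: "f \<ge> 2"
    proof (rule ccontr)
      assume "\<not> f \<ge> 2"
      then have "f = 1" using f0 by simp
      then have "[Q = 1] (mod int b)" using Qf by simp
      then have "[2 * Q = 2 * 1] (mod int b)" by (rule cong_scalar_left)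
      then have "[3 = 2] (mod int b)" using Q2 by (metis cong_sym cong_trans mult_1_right)
      then have "int b dvd 1" by (simp add: cong_iff_dvd_diff)
      then show False using b1 by simp
    qed
    have "[(2 * Q)^f = 3^f] (mod int b)" using Q2 by (rule cong_pow)
    moreover have "[(2 * Q)^f = 2^f * 1] (mod int b)" unfolding power_mult_distrib
      using Qf by (rule cong_scalar_left)
    ultimately have "[3^f = 2^f] (mod int b)" by (metis cong_sym cong_trans mult_1_right)
    then have fb: "bb dvd (3^f - 2^f)" unfolding bb_def by (simp add: cong_iff_dvd_diff)
    have x3: "\<not> 3 dvd int x" using x3n by presburger
    have f1: "f \<ge> 1" using f2 by simp
    interpret CS x bb M T d f
      by (unfold_locales) (fact assms(4), fact x3, fact bb1, fact cb3, fact cb2, fact Md(3), fact Md(1), fact Md(2), fact Tb, fact T1, fact f1, fact fb)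
    define K where "K = M + (nat bb - 1)"
    have "P K (int a)" unfolding K_def by (rule main_locale)
    then have "\<exists>Y. Reach x K Y \<and> bb dvd (Y - int a) \<and> 3^M dvd (Y - 1)"
    proof -
      have H: "\<forall>u. (3::int)^0 dvd (u - 0) \<longrightarrow> \<not> 3 dvd u \<longrightarrow> (\<exists>Y. Reach x K Y \<and> bb dvd Y - int a \<and> 3^M dvd Y - u)"
        using \<open>P K (int a)\<close> unfolding P_def Good_def .
      have "\<not> (3::int) dvd 1" by simp
      then show ?thesis using H[rule_format, of 1] by simp
    qed
    then obtain Y where Y: "Reach x K Y" "bb dvd (Y - int a)" "3^M dvd (Y - 1)" by blast
    then obtain s where s: "Y > 0" "s \<noteq> []" "len s \<le> K" "vs s (of_nat x) = of_int Y"
      unfolding Reach_def by blast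
    define n where "n = nat Y"
    have Yn: "Y = int n" unfolding n_def using s(1) by simp
    have vsn: "vs s (of_nat x) = of_nat n" using s(4) Yn by simp
    have adm: "s \<in> admissible x" unfolding admissible_def using s(1,2) vsn Yn by auto
    have "[int n = int a] (mod int b)" using Y(2) Yn unfolding bb_def by (simp add: cong_iff_dvd_diff)
    then have ca: "[n = a] (mod b)" by (simp only: cong_int_iff)
    have n3: "\<not> [n = 0] (mod 3)"
    proof
      assume "[n = 0] (mod 3)"
      then have "3 dvd n" by (simp add: cong_0_iff)
      then have "(3::int) dvd Y" using Yn by presburger
      moreover have "(3::int) dvd 3^M" using Md(3) by (cases M) auto
      then have "(3::int) dvd (Y - 1)" using Y(3) by (rule dvd_trans)
      ultimately have "(3::int) dvd Y - (Y - 1)" by (rule dvd_diff)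
      then show False by simp
    qed
    have "len s \<le> M + (b - 1)" using s(3) unfolding K_def bb_def by simp
    also have "\<dots> \<le> (b - 1) + (b - 1)" using Md(4) Tb_lt by simp
    also have "\<dots> = (b - 1) * 2" by simp
    also have "\<dots> \<le> (b - 1) * f" using f2 by simp
    finally have "len s \<le> (b - 1) * ord_three_halves b" unfolding f_def .
    then show ?thesis using adm vsn ca n3 by blast
  qed
qed


end
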